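(* Fix $\alpha\in(0,1]$ and let $X$ be as in the context. For every $\varepsilon>0$ there exists a constant $c=c(\varepsilon)$ such that for all $\beta\in(1,1+\alpha)$ and all $x>0$, $$\mathbf{P}\Big\{\inf_{0\leq t\leq1}X(t)\leq x\;\Big|\;X(0)=(1+\varepsilon)x\Big\}\leq1\wedge\frac{c}{x^{\beta-1}}.$$
   Context: $X$ is the continuous-state branching process of index $1+\alpha$: a $[0,\infty)$-valued time-homogeneous Markov process with càdlàg paths and $\mathbf{E}\{e^{-\lambda X(t)}\mid X(0)=x\}=\exp[-x(t+\lambda^{-\alpha})^{-1/\alpha}]$ for $\lambda,t,x\geq0$. *)

theory Defs
  imports "HOL-Probability.Probability"
begin

text \<open>Laplace exponent of the (1+alpha)-stable CSBP:
  u_t(lambda) = (t + lambda^(-alpha))^(-1/alpha), for lambda > 0.\<close>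
definition csbp_u :: "real \<Rightarrow> real \<Rightarrow> real \<Rightarrow> real" where
  "csbp_u \<alpha> t lam = (t + lam powr (-\<alpha>)) powr (-1/\<alpha>)"

definition nat_filtration :: "'a measure \<Rightarrow> (real \<Rightarrow> 'a \<Rightarrow> real) \<Rightarrow> real \<Rightarrow> 'a set set" where
  "nat_filtration M X s =
     sigma_sets (space M) (\<Union>r\<in>{0..s}. {X r -` B \<inter> space M | B. B \<in> sets borel})"

text \<open>A family of laws P y (y \<ge> 0 the starting point) on a common measurable space M,
  together with a process X, forms the continuous-state branching process of index 1+alpha:
  X is [0,\<infinity>)-valued with cadlag paths, X(0) = y almost surely under P y, and X is a
  time-homogeneous Markov process (w.r.t. its natural filtration) with
  E[exp(-\<lambda> X(s+t)) | F_s] = exp(- X(s) u_t(\<lambda>)).\<close>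
definition is_csbp :: "real \<Rightarrow> 'a measure \<Rightarrow> (real \<Rightarrow> 'a measure) \<Rightarrow> (real \<Rightarrow> 'a \<Rightarrow> real) \<Rightarrow> bool" where
  "is_csbp \<alpha> M P X \<longleftrightarrow>
     (\<forall>t\<ge>0. X t \<in> borel_measurable M) \<and>
     (\<forall>t\<ge>0. \<forall>\<omega>\<in>space M. X t \<omega> \<ge> 0) \<and>
     (\<forall>\<omega>\<in>space M. \<forall>t\<ge>0. ((\<lambda>s. X s \<omega>) \<longlongrightarrow> X t \<omega>) (at_right t)) \<and>
     (\<forall>\<omega>\<in>space M. \<forall>t>0. \<exists>l. ((\<lambda>s. X s \<omega>) \<longlongrightarrow> l) (at_left t)) \<and>
     (\<forall>y\<ge>0. prob_space (P y) \<and> sets (P y) = sets M \<and>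
        (AE \<omega> in P y. X 0 \<omega> = y) \<and>
        (\<forall>s\<ge>0. \<forall>t\<ge>0. \<forall>lam>0. \<forall>A\<in>nat_filtration M X s.
           (LINT \<omega>:A|P y. exp (- lam * X (s + t) \<omega>)) =
           (LINT \<omega>:A|P y. exp (- X s \<omega> * csbp_u \<alpha> t lam))))"

end

theory Submission
  imports Defs
begin

lemma filt_mem:
  fixes X :: "real \<Rightarrow> 'a \<Rightarrow> real"
  assumes "finite T" "T \<subseteq> {0..s}" "0 \<le> s"
  shows "{\<omega>\<in>space M. X s \<omega> < a \<and> (\<forall>r\<in>T. a \<le> X r \<omega>)} \<in> nat_filtration M X s"
proof -
  define G where "G = (\<Union>r\<in>{0..s}. {X r -` B \<inter> space M | B. B \<in> sets borel})"
  define N where "N = measure_of (space M) G (\<lambda>_. 0)"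
  have GP: "G \<subseteq> Pow (space M)" unfolding G_def by auto
  have sN: "sets N = nat_filtration M X s"
    unfolding N_def nat_filtration_def G_def[symmetric] using sets_measure_of[OF GP] by simp
  have gen: "X r -` B \<inter> space M \<in> sets N" if "r \<in> {0..s}" "B \<in> sets borel" for r B
  proof -
    have "X r -` B \<inter> space M \<in> G" unfolding G_def using that by blast
    then show ?thesis unfolding sN nat_filtration_def G_def[symmetric] by (rule sigma_sets.Basic)
  qed
  have A1: "X s -` {..<a} \<inter> space M \<in> sets N" using gen[of s "{..<a}"] assms by simp
  have eq: "{\<omega>\<in>space M. X s \<omega> < a \<and> (\<forall>r\<in>T. a \<le> X r \<omega>)} =
     (if T = {} then X s -` {..<a} \<inter> space M else
      (X s -` {..<a} \<inter> space M) \<inter> (\<Inter>r\<in>T. X r -` {a..} \<inter> space M))" by auto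
  have "(\<Inter>r\<in>T. X r -` {a..} \<inter> space M) \<in> sets N" if "T \<noteq> {}"
    apply (rule sets.finite_INT[OF assms(1) that])
    using gen assms(2) by auto
  then have "{\<omega>\<in>space M. X s \<omega> < a \<and> (\<forall>r\<in>T. a \<le> X r \<omega>)} \<in> sets N"
    unfolding eq using A1 by auto
  then show ?thesis using sN by simp
qed

lemma space_filt: "space M \<in> nat_filtration M X s"
proof -
  have "space M - {} \<in> nat_filtration M X s"
    unfolding nat_filtration_def by (intro sigma_sets.Compl sigma_sets.Empty)
  then show ?thesis by simp
qed

lemma u_le:
  assumes "0 < \<alpha>" "0 \<le> t" "0 < lam"
  shows "csbp_u \<alpha> t lam \<le> lam" "0 \<le> csbp_u \<alpha> t lam"
proof -
  have "(t + lam powr (-\<alpha>)) powr (-1/\<alpha>) \<le> (lam powr (-\<alpha>)) powr (-1/\<alpha>)"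
    by (rule powr_mono2') (use assms in auto)
  also have "\<dots> = lam" using assms by (simp add: powr_powr)
  finally show "csbp_u \<alpha> t lam \<le> lam" unfolding csbp_u_def .
  show "0 \<le> csbp_u \<alpha> t lam" unfolding csbp_u_def by simp
qed

lemma intg:
  assumes "prob_space N" "sets N = sets M" "f \<in> borel_measurable M" "\<forall>\<omega>\<in>space M. \<bar>f \<omega>\<bar> \<le> C"
  shows "integrable N (f :: _ \<Rightarrow> real)"
proof -
  interpret prob_space N by fact
  have sp: "space N = space M" using assms(2) by (rule sets_eq_imp_space_eq)
  show ?thesis
  proof (rule integrable_const_bound)
    show "AE x in N. norm (f x) \<le> C" using assms(4) sp by (intro AE_I2) auto
    show "f \<in> borel_measurable N" by (subst measurable_cong_sets[OF assms(2) refl]) (rule assms(3))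
  qed
qed


lemma filt_sub:
  assumes "\<forall>r\<in>{0..s}. X r \<in> borel_measurable M"
  shows "nat_filtration M X s \<subseteq> sets M"
  unfolding nat_filtration_def
  by (rule sets.sigma_sets_subset) (use assms in auto)

lemma key:
  fixes X :: "real \<Rightarrow> 'a \<Rightarrow> real"
  assumes csbp: "is_csbp \<alpha> M P X" and al: "0 < \<alpha>" and y: "0 \<le> y" and lam: "0 < lam"
    and T: "finite T" "T \<subseteq> {0..1}"
  shows "measure (P y) {\<omega>\<in>space M. \<exists>t\<in>T. X t \<omega> < a} \<le> exp (a * lam - y * csbp_u \<alpha> 1 lam)"
proof -
  have meas: "\<And>t. t \<ge> 0 \<Longrightarrow> X t \<in> borel_measurable M"
    and nonneg: "\<And>t \<omega>. t \<ge> 0 \<Longrightarrow> \<omega> \<in> space M \<Longrightarrow> X t \<omega> \<ge> 0"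
    and ps: "prob_space (P y)" and sP: "sets (P y) = sets M"
    and AE0: "AE \<omega> in P y. X 0 \<omega> = y"
    and mk: "\<And>s t lam A. s \<ge> 0 \<Longrightarrow> t \<ge> 0 \<Longrightarrow> lam > 0 \<Longrightarrow> A \<in> nat_filtration M X s \<Longrightarrow>
           (LINT \<omega>:A|P y. exp (- lam * X (s + t) \<omega>)) =
           (LINT \<omega>:A|P y. exp (- X s \<omega> * csbp_u \<alpha> t lam))"
    using csbp y unfolding is_csbp_def by auto
  interpret prob_space "P y" by (rule ps)
  have sp: "space (P y) = space M" using sP by (rule sets_eq_imp_space_eq)
  define g where "g \<omega> = exp (- lam * X 1 \<omega>)" for \<omega>
  define A where "A t = {\<omega>\<in>space M. X t \<omega> < a \<and> (\<forall>r\<in>{r\<in>T. r < t}. a \<le> X r \<omega>)}" for t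
  define B where "B = {\<omega>\<in>space M. \<exists>t\<in>T. X t \<omega> < a}"
  have Afilt: "A t \<in> nat_filtration M X t" if "t \<in> T" for t
    unfolding A_def using T that by (intro filt_mem) auto
  have Asets: "A t \<in> sets M" if "t \<in> T" for t
    using Afilt[OF that] filt_sub[of t X M] meas T that by auto
  have X1[measurable]: "X 1 \<in> borel_measurable M" using meas by simp
  have sub: "B \<subseteq> (\<Union>t\<in>T. A t)"
  proof
    fix \<omega> assume "\<omega> \<in> B"
    then have om: "\<omega> \<in> space M" and ex: "\<exists>t\<in>T. X t \<omega> < a" unfolding B_def by auto
    define S where "S = {t\<in>T. X t \<omega> < a}"
    have "finite S" "S \<noteq> {}" using T ex unfolding S_def by auto
    then have t0: "Min S \<in> S" and mn: "\<And>r. r \<in> S \<Longrightarrow> Min S \<le> r" by auto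
    have "\<omega> \<in> A (Min S)"
      unfolding A_def using t0 mn om unfolding S_def by force
    then show "\<omega> \<in> (\<Union>t\<in>T. A t)" using t0 unfolding S_def by auto
  qed
  have m1: "measure (P y) B \<le> (\<Sum>t\<in>T. measure (P y) (A t))"
  proof -
    have "measure (P y) B \<le> measure (P y) (\<Union>t\<in>T. A t)"
      using sub Asets T sP by (intro finite_measure_mono) auto
    also have "\<dots> \<le> (\<Sum>t\<in>T. measure (P y) (A t))"
      using Asets T sP by (intro finite_measure_subadditive_finite) auto
    finally show ?thesis .
  qed
  have intgA: "integrable (P y) (\<lambda>\<omega>. indicator (A t) \<omega> *\<^sub>R g \<omega>)" if "t \<in> T" for t
  proof (rule intg[OF ps sP, where C=1])
    have [measurable]: "A t \<in> sets M" using Asets that by simp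
    show "(\<lambda>\<omega>. indicator (A t) \<omega> *\<^sub>R g \<omega>) \<in> borel_measurable M" unfolding g_def by measurable
    show "\<forall>\<omega>\<in>space M. \<bar>indicator (A t) \<omega> *\<^sub>R g \<omega>\<bar> \<le> 1"
      unfolding g_def using nonneg[of 1] lam by (auto simp: indicator_def)
  qed
  have intg1: "integrable (P y) g"
  proof (rule intg[OF ps sP, where C=1])
    show "g \<in> borel_measurable M" unfolding g_def by measurable
    show "\<forall>\<omega>\<in>space M. \<bar>g \<omega>\<bar> \<le> 1"
      unfolding g_def using nonneg[of 1] lam by auto
  qed
  have m2: "exp (- a * lam) * measure (P y) (A t) \<le> (LINT \<omega>:A t|P y. g \<omega>)" if tT: "t \<in> T" for t
  proof -
    have t01: "0 \<le> t" "t \<le> 1" using T tT by auto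
    define u where "u = csbp_u \<alpha> (1 - t) lam"
    have u: "0 \<le> u" "u \<le> lam" unfolding u_def using u_le[OF al _ lam, of "1-t"] t01 by auto
    have "(LINT \<omega>:A t|P y. g \<omega>) = (LINT \<omega>:A t|P y. exp (- X t \<omega> * u))"
      using mk[OF t01(1) _ lam Afilt[OF tT], of "1 - t"] t01 unfolding g_def u_def by simp
    moreover have "exp (- a * lam) * measure (P y) (A t) = (LINT \<omega>:A t|P y. exp (- a * lam))"
      using Asets[OF tT] sP by (subst set_integral_const) (auto simp: emeasure_eq_measure)
    moreover have "(LINT \<omega>:A t|P y. exp (- a * lam)) \<le> (LINT \<omega>:A t|P y. exp (- X t \<omega> * u))"
      unfolding set_lebesgue_integral_def
    proof (rule integral_mono)
      have [measurable]: "A t \<in> sets M" "X t \<in> borel_measurable M" using Asets tT meas t01 by auto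
      show "integrable (P y) (\<lambda>\<omega>. indicator (A t) \<omega> *\<^sub>R exp (- a * lam))"
        apply (rule intg[OF ps sP, where C="exp (- a * lam)"])
         apply measurable
        done
      show "integrable (P y) (\<lambda>\<omega>. indicator (A t) \<omega> *\<^sub>R exp (- X t \<omega> * u))"
        apply (rule intg[OF ps sP, where C=1])
         apply measurable
        using nonneg[OF t01(1)] u by (auto simp: indicator_def)
      fix \<omega> assume "\<omega> \<in> space (P y)"
      show "indicator (A t) \<omega> *\<^sub>R exp (- a * lam) \<le> indicator (A t) \<omega> *\<^sub>R exp (- X t \<omega> * u)"
      proof (cases "\<omega> \<in> A t")
        case True
        then have "X t \<omega> < a" "0 \<le> X t \<omega>" using nonneg[OF t01(1)] unfolding A_def by auto
        then have "X t \<omega> * u \<le> a * lam" using u by (intro mult_mono) auto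
        then show ?thesis using True by simp
      qed simp
    qed
    ultimately show ?thesis by simp
  qed
  have disj: "t = t'" if "t \<in> T" "t' \<in> T" "\<omega> \<in> A t" "\<omega> \<in> A t'" for t t' \<omega>
    using that unfolding A_def by (metis (mono_tags, lifting) linorder_neqE_linordered_idom mem_Collect_eq not_le)
  have m3: "(\<Sum>t\<in>T. (LINT \<omega>:A t|P y. g \<omega>)) \<le> integral\<^sup>L (P y) g"
  proof -
    have "(\<Sum>t\<in>T. (LINT \<omega>:A t|P y. g \<omega>)) = (LINT \<omega>|P y. (\<Sum>t\<in>T. indicator (A t) \<omega> *\<^sub>R g \<omega>))"
      unfolding set_lebesgue_integral_def using Bochner_Integration.integral_sum[where I=T and M="P y" and f="\<lambda>t \<omega>. indicator (A t) \<omega> *\<^sub>R g \<omega>", OF intgA] by simp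
    also have "\<dots> \<le> integral\<^sup>L (P y) g"
    proof (rule integral_mono)
      show "integrable (P y) (\<lambda>\<omega>. \<Sum>t\<in>T. indicator (A t) \<omega> *\<^sub>R g \<omega>)"
        using intgA by auto
      show "integrable (P y) g" by (rule intg1)
      fix \<omega> assume "\<omega> \<in> space (P y)"
      have g0: "0 \<le> g \<omega>" unfolding g_def by simp
      have s1: "(\<Sum>t\<in>T. indicator (A t) \<omega>) \<le> (1::real)"
      proof (cases "\<exists>t\<in>T. \<omega> \<in> A t")
        case True
        then obtain t0 where t0: "t0 \<in> T" "\<omega> \<in> A t0" by auto
        have "(\<Sum>t\<in>T. indicator (A t) \<omega>) = indicator (A t0) \<omega> + (\<Sum>t\<in>T-{t0}. indicator (A t) \<omega>)"
          using T t0 by (subst sum.remove) auto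
        also have "(\<Sum>t\<in>T-{t0}. indicator (A t) \<omega>) = (0::real)"
          using disj[OF _ t0(1) _ t0(2)] by (intro sum.neutral) (auto simp: indicator_def)
        finally show ?thesis using t0 by simp
      next
        case False
        then show ?thesis by (simp add: indicator_def)
      qed
      have "(\<Sum>t\<in>T. indicator (A t) \<omega> *\<^sub>R g \<omega>) = (\<Sum>t\<in>T. indicator (A t) \<omega>) * g \<omega>"
        by (simp add: sum_distrib_right)
      also have "\<dots> \<le> 1 * g \<omega>" using s1 g0 by (intro mult_right_mono) auto
      finally show "(\<Sum>t\<in>T. indicator (A t) \<omega> *\<^sub>R g \<omega>) \<le> g \<omega>" by simp
    qed
    finally show ?thesis .
  qed
  have m4: "integral\<^sup>L (P y) g = exp (- y * csbp_u \<alpha> 1 lam)"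
  proof -
    have e: "(LINT \<omega>:space M|P y. exp (- lam * X (0 + 1) \<omega>)) =
           (LINT \<omega>:space M|P y. exp (- X 0 \<omega> * csbp_u \<alpha> 1 lam))"
      by (rule mk[OF _ _ lam space_filt]) auto
    have "integral\<^sup>L (P y) g = (LINT \<omega>:space M|P y. exp (- lam * X (0 + 1) \<omega>))"
      using set_integral_space[OF intg1] sp unfolding g_def by simp
    also have "\<dots> = (LINT \<omega>:space M|P y. exp (- X 0 \<omega> * csbp_u \<alpha> 1 lam))" by (rule e)
    also have "\<dots> = (LINT \<omega>|P y. exp (- y * csbp_u \<alpha> 1 lam))"
      unfolding set_lebesgue_integral_def
    proof (rule integral_cong_AE)
      have [measurable]: "X 0 \<in> borel_measurable M" using meas by simp
      show "(\<lambda>\<omega>. indicator (space M) \<omega> *\<^sub>R exp (- X 0 \<omega> * csbp_u \<alpha> 1 lam)) \<in> borel_measurable (P y)"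
        by (subst measurable_cong_sets[OF sP refl]) measurable
      show "AE \<omega> in P y. indicator (space M) \<omega> *\<^sub>R exp (- X 0 \<omega> * csbp_u \<alpha> 1 lam) = exp (- y * csbp_u \<alpha> 1 lam)"
        using AE0 sp by (auto simp: indicator_def)
    qed simp
    also have "\<dots> = exp (- y * csbp_u \<alpha> 1 lam)" by (simp add: prob_space)
    finally show ?thesis .
  qed
  have "exp (- a * lam) * measure (P y) B \<le> exp (- a * lam) * (\<Sum>t\<in>T. measure (P y) (A t))"
    using m1 by (intro mult_left_mono) auto
  also have "\<dots> \<le> (\<Sum>t\<in>T. (LINT \<omega>:A t|P y. g \<omega>))"
    unfolding sum_distrib_left using m2 by (intro sum_mono) auto
  also have "\<dots> \<le> exp (- y * csbp_u \<alpha> 1 lam)" using m3 m4 by simp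
  finally have f: "exp (- a * lam) * measure (P y) B \<le> exp (- y * csbp_u \<alpha> 1 lam)" .
  have "measure (P y) B = exp (a * lam) * (exp (- a * lam) * measure (P y) B)"
    by (simp add: exp_minus field_simps)
  also have "\<dots> \<le> exp (a * lam) * exp (- y * csbp_u \<alpha> 1 lam)"
    using f by (intro mult_left_mono) auto
  also have "\<dots> = exp (a * lam - y * csbp_u \<alpha> 1 lam)" by (simp add: exp_add[symmetric])
  finally show ?thesis unfolding B_def .
qed

lemma arith_fin:
  fixes \<kappa> x \<beta> :: real
  assumes "0 < \<kappa>" "0 < x" "0 < \<beta> - 1" "\<beta> - 1 \<le> 1"
  shows "exp (- \<kappa> * x) \<le> max 1 (1/\<kappa>) / x powr (\<beta> - 1)"
proof (cases "x \<le> 1")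
  case True
  have "x powr (\<beta> - 1) \<le> 1" using True assms by (simp add: powr_le1)
  moreover have "0 < x powr (\<beta> - 1)" using assms by simp
  ultimately have "1 \<le> max 1 (1/\<kappa>) / x powr (\<beta> - 1)"
    by (simp add: le_divide_eq) 
  moreover have "exp (- \<kappa> * x) \<le> 1" using assms by simp
  ultimately show ?thesis by linarith
next
  case False
  have xp: "x powr (\<beta> - 1) \<le> x" using False assms
    by (metis powr_mono powr_one_gt_zero_iff less_eq_real_def not_le)
  have "1 + \<kappa> * x \<le> exp (\<kappa> * x)" by (rule exp_ge_add_one_self)
  then have "\<kappa> * x \<le> exp (\<kappa> * x)" by linarith
  then have "exp (- \<kappa> * x) \<le> 1 / (\<kappa> * x)" using assms
    by (simp add: exp_minus field_simps)
  also have "\<dots> = (1/\<kappa>) / x" by simp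
  also have "\<dots> \<le> max 1 (1/\<kappa>) / x" using assms by (intro divide_right_mono) auto
  also have "\<dots> \<le> max 1 (1/\<kappa>) / x powr (\<beta> - 1)" using assms xp
    by (intro divide_left_mono) auto
  finally show ?thesis .
qed

lemma dyadic:
  fixes t b :: real
  assumes "0 \<le> t" "t < b" "b \<le> 1"
  shows "\<exists>n. \<exists>k\<le>2^n. t < real k / 2^n \<and> real k / 2^n < b"
proof -
  obtain n where n: "(1/2::real)^n < b - t" using real_arch_pow_inv[of "b - t" "1/2"] assms by auto
  define k where "k = nat \<lfloor>t * 2^n\<rfloor> + 1"
  have tk: "real k = of_int \<lfloor>t * 2^n\<rfloor> + 1" unfolding k_def using assms by simp
  have p: "(0::real) < 2^n" by simp
  have "t * 2^n < real k" unfolding tk by linarith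
  then have 1: "t < real k / 2^n" using p by (simp add: field_simps)
  have "real k \<le> t * 2^n + 1" unfolding tk by linarith
  then have "real k / 2^n \<le> t + 1/2^n" using p by (simp add: field_simps)
  also have "1/2^n = (1/2::real)^n" by (simp add: power_divide)
  finally have 2: "real k / 2^n < b" using n by linarith
  then have "real k < b * 2^n" using p by (simp add: field_simps)
  also have "\<dots> \<le> 1 * 2^n" using assms p by (intro mult_right_mono) auto
  finally have "real k < 2^n" by simp
  then have "k \<le> 2^n" by (metis less_imp_le of_nat_le_iff of_nat_numeral of_nat_power)
  then show ?thesis using 1 2 by blast
qed

lemma lam_choice:
  fixes \<alpha> \<epsilon> :: real
  assumes "0 < \<alpha>" "0 < \<epsilon>"
  shows "\<exists>lam>0. (1 + \<epsilon>/2) * lam < (1 + \<epsilon>) * (1 + lam powr (-\<alpha>)) powr (-1/\<alpha>)"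
proof -
  define r where "r = (1 + \<epsilon>/2) / (1 + \<epsilon>)"
  have r: "0 < r" "r < 1" unfolding r_def using assms by auto
  define q where "q = r powr \<alpha>"
  have q: "0 < q" "q < 1" unfolding q_def using r assms powr_less_mono2[of \<alpha> r 1] by auto
  define K where "K = 1 / (1 - q)"
  have K: "0 < K" unfolding K_def using q by simp
  define lam where "lam = K powr (-1/\<alpha>)"
  have lam: "0 < lam" unfolding lam_def using K by simp
  have lK: "lam powr (-\<alpha>) = K" unfolding lam_def using assms K by (simp add: powr_powr)
  have KK: "K / (1 + K) = 1 / (2 - q)" unfolding K_def using q by (simp add: field_simps)
  have sq: "1 - q * (2 - q) = (1 - q)^2" by (simp add: power2_eq_square algebra_simps)
  have "0 < (1 - q)^2" using q by simp
  then have "q * (2 - q) < 1" using sq by linarith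
  then have "q < K / (1 + K)" unfolding KK using q by (simp add: less_divide_eq)
  then have "q powr (1/\<alpha>) < (K / (1 + K)) powr (1/\<alpha>)"
    using q assms by (intro powr_less_mono2) auto
  moreover have "q powr (1/\<alpha>) = r" unfolding q_def using r assms by (simp add: powr_powr)
  ultimately have rl: "r < (K / (1 + K)) powr (1/\<alpha>)" by simp
  have eq: "(1 + K) powr (-1/\<alpha>) = lam * (K / (1 + K)) powr (1/\<alpha>)"
  proof -
    have "lam * (K / (1 + K)) powr (1/\<alpha>) = K powr (-1/\<alpha>) * (K powr (1/\<alpha>) / (1+K) powr (1/\<alpha>))"
      unfolding lam_def using K by (simp add: powr_divide)
    also have "\<dots> = (K powr (-1/\<alpha>) * K powr (1/\<alpha>)) / (1+K) powr (1/\<alpha>)" by simp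
    also have "K powr (-1/\<alpha>) * K powr (1/\<alpha>) = 1" using K by (simp add: powr_add[symmetric])
    also have "1 / (1+K) powr (1/\<alpha>) = (1 + K) powr (-1/\<alpha>)" using K
      by (simp add: powr_minus_divide)
    finally show ?thesis by simp
  qed
  have "(1 + \<epsilon>/2) * lam = (1 + \<epsilon>) * (r * lam)" unfolding r_def using assms by simp
  also have "\<dots> < (1 + \<epsilon>) * (lam * (K / (1 + K)) powr (1/\<alpha>))"
    using rl lam assms by simp
  also have "\<dots> = (1 + \<epsilon>) * (1 + lam powr (-\<alpha>)) powr (-1/\<alpha>)" unfolding lK eq ..
  finally show ?thesis using lam by blast
qed

theorem lemma15:
  fixes \<alpha> :: real and M :: "'a measure" and P :: "real \<Rightarrow> 'a measure"
    and X :: "real \<Rightarrow> 'a \<Rightarrow> real"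
  assumes "0 < \<alpha>" and "\<alpha> \<le> 1"
    and "is_csbp \<alpha> M P X"
  shows "\<forall>\<epsilon>>0. \<exists>c::real. \<forall>\<beta>\<in>{1<..<1+\<alpha>}. \<forall>x>0.
           measure (P ((1 + \<epsilon>) * x)) {\<omega>\<in>space M. (INF t\<in>{0..1}. X t \<omega>) \<le> x}
             \<le> min 1 (c / x powr (\<beta> - 1))"
proof (intro allI impI)
  fix \<epsilon> :: real assume eps: "0 < \<epsilon>"
  obtain lam where lam: "0 < lam"
    and ineq: "(1 + \<epsilon>/2) * lam < (1 + \<epsilon>) * (1 + lam powr (-\<alpha>)) powr (-1/\<alpha>)"
    using lam_choice[OF assms(1) eps] by blast
  define u1 where "u1 = csbp_u \<alpha> 1 lam"
  have u1: "u1 = (1 + lam powr (-\<alpha>)) powr (-1/\<alpha>)" unfolding u1_def csbp_u_def by simp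
  define \<kappa> where "\<kappa> = (1 + \<epsilon>) * u1 - (1 + \<epsilon>/2) * lam"
  have kap: "0 < \<kappa>" using ineq u1 unfolding \<kappa>_def by simp
  show "\<exists>c::real. \<forall>\<beta>\<in>{1<..<1+\<alpha>}. \<forall>x>0.
           measure (P ((1 + \<epsilon>) * x)) {\<omega>\<in>space M. (INF t\<in>{0..1}. X t \<omega>) \<le> x}
             \<le> min 1 (c / x powr (\<beta> - 1))"
  proof (intro exI ballI allI impI)
    fix \<beta> x :: real assume \<beta>: "\<beta> \<in> {1<..<1+\<alpha>}" and x: "0 < x"
    define y where "y = (1 + \<epsilon>) * x"
    define a where "a = (1 + \<epsilon>/2) * x"
    have y0: "0 \<le> y" unfolding y_def using eps x by simp
    have xa: "x < a" unfolding a_def using eps x by simp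
    have meas: "\<And>t. t \<ge> 0 \<Longrightarrow> X t \<in> borel_measurable M"
      and nonneg: "\<And>t \<omega>. t \<ge> 0 \<Longrightarrow> \<omega> \<in> space M \<Longrightarrow> X t \<omega> \<ge> 0"
      and rc: "\<And>\<omega> t. \<omega> \<in> space M \<Longrightarrow> t \<ge> 0 \<Longrightarrow> ((\<lambda>s. X s \<omega>) \<longlongrightarrow> X t \<omega>) (at_right t)"
      and ps: "prob_space (P y)" and sP: "sets (P y) = sets M"
      using assms(3) y0 unfolding is_csbp_def by auto
    interpret prob_space "P y" by (rule ps)
    define T where "T n = (\<lambda>k. real k / 2^n) ` {..(2::nat)^n}" for n
    define B where "B n = {\<omega>\<in>space M. \<exists>t\<in>T n. X t \<omega> < a}" for n
    have Tfin: "finite (T n)" for n unfolding T_def by simp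
    have Tsub: "T n \<subseteq> {0..1}" for n
    proof
      fix t assume "t \<in> T n"
      then obtain k where k: "k \<le> 2^n" "t = real k / 2^n" unfolding T_def by auto
      have "real k \<le> 2^n" using k(1) by (metis of_nat_le_iff of_nat_numeral of_nat_power)
      moreover have "(0::real) < 2^n" by simp
      ultimately have "real k / 2^n \<le> 1" "0 \<le> real k / 2^n" by (simp_all add: divide_le_eq_1)
      then show "t \<in> {0..1}" using k by simp
    qed
    have expo: "a * lam - y * u1 = - \<kappa> * x"
      unfolding a_def y_def \<kappa>_def by (simp add: algebra_simps)
    have Bb: "measure (P y) (B n) \<le> exp (- \<kappa> * x)" for n
      using key[OF assms(3) assms(1) y0 lam Tfin Tsub, of n a] expo
      unfolding B_def u1_def by simp
    have Bsets: "B n \<in> sets M" for n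
    proof -
      have "B n = (\<Union>t\<in>T n. X t -` {..<a} \<inter> space M)" unfolding B_def by auto
      also have "\<dots> \<in> sets M"
      proof (intro sets.finite_UN Tfin)
        fix t assume "t \<in> T n"
        then have "0 \<le> t" using Tsub by force
        then show "X t -` {..<a} \<inter> space M \<in> sets M"
          using measurable_sets[OF meas lessThan_borel] by blast
      qed
      finally show ?thesis .
    qed
    have inc: "incseq B"
    proof (rule incseq_SucI)
      fix n
      have "T n \<subseteq> T (Suc n)"
      proof
        fix t assume "t \<in> T n"
        then obtain k where k: "k \<le> 2^n" "t = real k / 2^n" unfolding T_def by auto
        have "t = real (2*k) / 2^(Suc n)" using k by simp
        moreover have "2*k \<le> 2^(Suc n)" using k by simp
        ultimately show "t \<in> T (Suc n)" unfolding T_def by blast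
      qed
      then show "B n \<subseteq> B (Suc n)" unfolding B_def by auto
    qed
    have rng: "range B \<subseteq> sets (P y)" using Bsets sP by auto
    have lim: "(\<lambda>n. measure (P y) (B n)) \<longlonglongrightarrow> measure (P y) (\<Union>(range B))"
      by (rule finite_Lim_measure_incseq[OF rng inc])
    have U: "measure (P y) (\<Union>(range B)) \<le> exp (- \<kappa> * x)"
      by (rule LIMSEQ_le_const2[OF lim]) (use Bb in auto)
    have Usets: "\<Union>(range B) \<in> sets (P y)" using rng by (intro sets.countable_UN) simp
    have Esub: "{\<omega>\<in>space M. (INF t\<in>{0..1}. X t \<omega>) \<le> x} \<subseteq> \<Union>(range B)"
    proof
      fix \<omega> assume "\<omega> \<in> {\<omega>\<in>space M. (INF t\<in>{0..1}. X t \<omega>) \<le> x}"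
      then have om: "\<omega> \<in> space M" and inf: "(INF t\<in>{0..1}. X t \<omega>) \<le> x" by simp_all
      have bdd: "bdd_below ((\<lambda>t. X t \<omega>) ` {0..1})"
        by (rule bdd_belowI2[where m=0]) (use nonneg om in simp)
      have lt: "(INF t\<in>{0..1}. X t \<omega>) < a" using inf xa by linarith
      have "\<exists>t\<in>{0..1}. X t \<omega> < a"
        using iffD1[OF cINF_less_iff[OF _ bdd] lt] by simp
      then obtain t where t: "t \<in> {0..1}" "X t \<omega> < a" by blast
      have t0: "0 \<le> t" using t(1) by simp
      show "\<omega> \<in> \<Union>(range B)"
      proof (cases "t = 1")
        case True
        have T0: "1 \<in> T 0" unfolding T_def by (rule image_eqI[of _ _ 1]) simp_all
        have "X 1 \<omega> < a" using t(2) True by simp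
        then have "\<omega> \<in> B 0" unfolding B_def using om T0 by blast
        then show ?thesis by blast
      next
        case False
        then have t1: "t < 1" using t by simp
        have "eventually (\<lambda>s. X s \<omega> < a) (at_right t)"
          by (rule order_tendstoD(2)[OF rc[OF om t0] t(2)])
        then obtain b where b: "b > t" "\<And>s. s > t \<Longrightarrow> s < b \<Longrightarrow> X s \<omega> < a"
          unfolding eventually_at_right_field by blast
        have mb: "t < min b 1" using b(1) t1 by simp
        obtain n k where nk: "k \<le> 2^n" "t < real k / 2^n" "real k / 2^n < min b 1"
          using dyadic[OF t0 mb] by auto
        have "real k / 2^n \<in> T n" unfolding T_def using nk(1) by blast
        moreover have "X (real k / 2^n) \<omega> < a" using b(2)[OF nk(2)] nk(3) by simp
        ultimately have "\<omega> \<in> B n" unfolding B_def using om by blast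
        then show ?thesis by blast
      qed
    qed
    have m: "measure (P y) {\<omega>\<in>space M. (INF t\<in>{0..1}. X t \<omega>) \<le> x} \<le> exp (- \<kappa> * x)"
      using finite_measure_mono[OF Esub Usets] U by linarith
    have "exp (- \<kappa> * x) \<le> max 1 (1/\<kappa>) / x powr (\<beta> - 1)"
      using \<beta> assms(2) by (intro arith_fin kap x) auto
    moreover have "measure (P y) {\<omega>\<in>space M. (INF t\<in>{0..1}. X t \<omega>) \<le> x} \<le> 1"
      by (rule prob_le_1)
    ultimately have "measure (P y) {\<omega>\<in>space M. (INF t\<in>{0..1}. X t \<omega>) \<le> x}
             \<le> min 1 (max 1 (1/\<kappa>) / x powr (\<beta> - 1))"
      using m by (intro min.boundedI) linarith+
    then show "measure (P ((1 + \<epsilon>) * x)) {\<omega>\<in>space M. (INF t\<in>{0..1}. X t \<omega>) \<le> x}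
             \<le> min 1 (max 1 (1/\<kappa>) / x powr (\<beta> - 1))"
      unfolding y_def .
  qed
qed

end
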